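(* Let $q$ be a prime power and $1\le t_i\le t_o\le s$. If there exists a linear $(t_i,t_o,s,q)$-AONT, then there exists a linear $(t_i',t_o,s,q)$-AONT for every $t_i'$ with $1\le t_i'\le t_i$.
   Context: A linear $(t_i,t_o,s,q)$-AONT is given by an invertible $s\times s$ matrix $M$ over $\mathbb{F}_q$ defining the map $\mathbf{x}\mapsto\mathbf{y}=\mathbf{x}M^{-1}$ on row vectors of $\mathbb{F}_q^s$, such that for every set $I$ of $t_i$ input coordinates and every set $J$ of $s-t_o$ output coordinates, the pair $((x_i)_{i\in I},(y_j)_{j\in J})$ takes every value in $\mathbb{F}_q^{t_i+s-t_o}$ equally often as $\mathbf{x}$ ranges over $\mathbb{F}_q^s$. Equivalently, $M$ is invertible and every $t_o\times t_i$ submatrix of $M$ has rank $t_i$. *)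

theory Defs
  imports "Jordan_Normal_Form.DL_Rank" "Jordan_Normal_Form.DL_Submatrix"
begin

text \<open>A linear (t_i, t_o, s, q)-AONT over the finite field 'a (with q = CARD('a)):
  an invertible s x s matrix M such that every t_o x t_i submatrix
  (rows J = output coordinates, columns I = input coordinates) has rank t_i.\<close>

definition linear_AONT :: "nat \<Rightarrow> nat \<Rightarrow> nat \<Rightarrow> 'a::{finite,field} mat \<Rightarrow> bool" where
  "linear_AONT ti to s M \<longleftrightarrow>
     M \<in> carrier_mat s s \<and> invertible_mat M \<and>
     (\<forall>I J. I \<subseteq> {..<s} \<and> card I = ti \<and> J \<subseteq> {..<s} \<and> card J = to \<longrightarrow>
        vec_space.rank to (submatrix M J I) = ti)"

end

theory Submission
  imports Defs
begin

lemma (in vec_space) rank_full_distinct: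
  assumes A: "A \<in> carrier_mat n k" and r: "rank A = k"
  shows "distinct (cols A)"
proof -
  obtain S where S: "maximal S (\<lambda>T. T \<subseteq> set (cols A) \<and> lin_indpt T)"
    using maximal_exists[of "(\<lambda>T. T \<subseteq> set (cols A) \<and> lin_indpt T)" "card (set (cols A))" "{}"]
    by (meson List.finite_set card_mono empty_iff empty_subsetI finite_lin_indpt2 rev_finite_subset)
  then have "card S \<le> card (set (cols A))" by (simp add: card_mono maximal_def)
  moreover have "rank A = card S" using rank_card_indpt[OF A S] .
  ultimately have "length (cols A) \<le> card (set (cols A))" using A r by simp
  then show ?thesis using card_distinct card_length le_antisym by metis
qed

lemma (in vec_space) rank_sub_cols:
  assumes A: "A \<in> carrier_mat n k" and A': "A' \<in> carrier_mat n k'"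
    and r: "rank A = k"
    and c: "cols A' = map (\<lambda>j. cols A ! f j) [0..<k']"
    and fk: "\<And>j. j < k' \<Longrightarrow> f j < k"
    and finj: "inj_on f {..<k'}"
  shows "rank A' = k'"
proof -
  have dA: "distinct (cols A)" using rank_full_distinct[OF A r] .
  have sub: "set (cols A') \<subseteq> set (cols A)"
  proof
    fix v assume "v \<in> set (cols A')"
    then obtain j where j: "j < k'" "v = cols A ! f j" using c by auto
    then have "f j < length (cols A)" using fk A by auto
    then show "v \<in> set (cols A)" using j(2) nth_mem by blast
  qed
  have "distinct (cols A')"
    unfolding c distinct_map
  proof
    show "distinct [0..<k']" by simp
    show "inj_on (\<lambda>j. cols A ! f j) (set [0..<k'])"
    proof (rule inj_onI)
      fix x y assume x: "x \<in> set [0..<k']" and y: "y \<in> set [0..<k']"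
        and e: "cols A ! f x = cols A ! f y"
      have "f x < length (cols A)" "f y < length (cols A)" using x y fk A by auto
      then have "f x = f y" using e dA nth_eq_iff_index_eq by blast
      then show "x = y" using finj x y by (auto dest: inj_onD)
    qed
  qed
  moreover have "lin_indpt (set (cols A'))"
    using subset_li_is_li[OF full_rank_lin_indpt[OF A r dA] sub] .
  ultimately show ?thesis using lin_indpt_full_rank[OF A'] by blast
qed

theorem mainTheorem9:
  fixes M :: "'a::{finite,field} mat"
    and ti ti' to s :: nat
  assumes "1 \<le> ti" and "ti \<le> to" and "to \<le> s"
    and "linear_AONT ti to s M"
    and "1 \<le> ti'" and "ti' \<le> ti"
  shows "\<exists>M' :: 'a mat. linear_AONT ti' to s M'"
proof (intro exI)
  have Mc: "M \<in> carrier_mat s s" and Mi: "invertible_mat M"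
    and H: "\<And>I J. I \<subseteq> {..<s} \<Longrightarrow> card I = ti \<Longrightarrow> J \<subseteq> {..<s} \<Longrightarrow> card J = to \<Longrightarrow>
        vec_space.rank to (submatrix M J I) = ti"
    using assms(4) unfolding linear_AONT_def by auto
  show "linear_AONT ti' to s M"
    unfolding linear_AONT_def
  proof (intro conjI Mc Mi allI impI)
    fix I' J assume a: "I' \<subseteq> {..<s} \<and> card I' = ti' \<and> J \<subseteq> {..<s} \<and> card J = to"
    have fI': "finite I'" using a finite_subset by blast
    have "card ({..<s} - I') = s - ti'" using a fI' by (simp add: card_Diff_subset)
    then obtain D where D: "D \<subseteq> {..<s} - I'" "card D = ti - ti'"
      using obtain_subset_with_card_n[of "ti - ti'" "{..<s} - I'"] assms by force
    define I where "I = I' \<union> D"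
    have fD: "finite D" using D(1) finite_subset by blast
    have II: "I' \<subseteq> I" "I \<subseteq> {..<s}" using a D unfolding I_def by auto
    have cI: "card I = ti" unfolding I_def using D a fI' fD assms
      by (subst card_Un_disjoint) auto
    have rI: "vec_space.rank to (submatrix M J I) = ti" using H[OF II(2) cI] a by auto
    have cJ: "{i. i < dim_row M \<and> i \<in> J} = J" using a Mc by auto
    have cI2: "{j. j < dim_col M \<and> j \<in> I} = I" using II Mc by auto
    have cI3: "{j. j < dim_col M \<and> j \<in> I'} = I'" using a Mc by auto
    have Ac: "submatrix M J I \<in> carrier_mat to ti"
      using cJ cI2 a cI by (auto simp: dim_submatrix)
    have A'c: "submatrix M J I' \<in> carrier_mat to ti'"
      using cJ cI3 a by (auto simp: dim_submatrix)
    define f where "f j = card {a\<in>I. a < pick I' j}" for j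
    have pin: "pick I' j \<in> I'" if "j < ti'" for j using pick_in_set that a by auto
    have pf: "pick I (f j) = pick I' j" if "j < ti'" for j
      unfolding f_def using pick_card_in_set pin[OF that] II by auto
    have fk: "f j < ti" if "j < ti'" for j
    proof -
      have fin: "finite I" using II finite_subset by blast
      have "{a\<in>I. a < pick I' j} \<subset> I" using pin[OF that] II by auto
      then show ?thesis unfolding f_def using psubset_card_mono[OF fin] cI by auto
    qed
    have finj: "inj_on f {..<ti'}"
    proof (rule inj_onI)
      fix x y assume "x \<in> {..<ti'}" "y \<in> {..<ti'}" "f x = f y"
      then have "pick I' x = pick I' y" using pf by (metis lessThan_iff)
      moreover have "x < y \<Longrightarrow> pick I' x < pick I' y" "y < x \<Longrightarrow> pick I' y < pick I' x"
        using pick_mono \<open>x \<in> {..<ti'}\<close> \<open>y \<in> {..<ti'}\<close> a by auto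
      ultimately show "x = y" by (metis less_irrefl nat_neq_iff)
    qed
    have colseq: "cols (submatrix M J I') = map (\<lambda>j. cols (submatrix M J I) ! f j) [0..<ti']"
    proof (rule nth_equalityI)
      show "length (cols (submatrix M J I')) = length (map (\<lambda>j. cols (submatrix M J I) ! f j) [0..<ti'])"
        using A'c by simp
      fix j assume "j < length (cols (submatrix M J I'))"
      then have j: "j < ti'" using A'c by simp
      have "col (submatrix M J I') j = col (submatrix M J I) (f j)"
      proof (rule eq_vecI)
        show "dim_vec (col (submatrix M J I') j) = dim_vec (col (submatrix M J I) (f j))"
          using Ac A'c by simp
        fix i assume "i < dim_vec (col (submatrix M J I) (f j))"
        then have i: "i < to" using Ac by simp
        have "col (submatrix M J I') j $ i = submatrix M J I' $$ (i, j)"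
          using i j A'c by simp
        also have "\<dots> = M $$ (pick J i, pick I' j)"
          by (rule submatrix_index) (use i j cJ cI3 a in auto)
        also have "\<dots> = M $$ (pick J i, pick I (f j))" using pf[OF j] by simp
        also have "\<dots> = submatrix M J I $$ (i, f j)"
          by (rule submatrix_index[symmetric]) (use i fk[OF j] cJ cI2 a cI in auto)
        also have "\<dots> = col (submatrix M J I) (f j) $ i"
          using i fk[OF j] Ac by simp
        finally show "col (submatrix M J I') j $ i = col (submatrix M J I) (f j) $ i" .
      qed
      then show "cols (submatrix M J I') ! j = map (\<lambda>j. cols (submatrix M J I) ! f j) [0..<ti'] ! j"
        using j fk[OF j] Ac A'c by simp
    qed
    show "vec_space.rank to (submatrix M J I') = ti'"
      using vec_space.rank_sub_cols[OF Ac A'c rI colseq fk finj] by blast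
  qed
qed

end
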